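(* Let $(G,\vdash,\dashv)$ be a digroup with distinguished bar-unit $1$, let $E\subset G$ be the set of bar-units and $J\le G$ the group of inverses $\{x^{-1}:x\in G\}$, and let $x\circ y:=x\vdash y\dashv x^{-1}$. Then $G$ is isomorphic to the digroup $(E\times J,\vdash,\dashv)$ whose operations are defined by $$(u,h)\vdash(v,k)=(h\circ v,\ h\vdash k),\qquad (u,h)\dashv(v,k)=(u,\ h\dashv k)$$ for $u,v\in E$, $h,k\in J$.
   Context: A digroup $(G,\vdash,\dashv)$ is a set with two binary operations such that (G1) $(G,\vdash)$ and $(G,\dashv)$ are semigroups; (G2) $x\vdash(y\dashv z)=(x\vdash y)\dashv z$; (G3) $x\dashv(y\vdash z)=x\dashv(y\dashv z)$; (G4) $(x\dashv y)\vdash z=(x\vdash y)\vdash z$; (G5) there is a distinguished $1\in G$ with $1\vdash x=x\dashv 1=x$ for all $x$; (G6) every $x$ has $x^{-1}$ with $x\vdash x^{-1}=x^{-1}\dashv x=1$. A bar-unit is an $e$ with $e\vdash x=x\dashv e=x$ for all $x$. An isomorphism of digroups is a bijection preserving both operations. *)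

theory Defs
  imports Main
begin

definition digroup :: "'a set \<Rightarrow> ('a \<Rightarrow> 'a \<Rightarrow> 'a) \<Rightarrow> ('a \<Rightarrow> 'a \<Rightarrow> 'a) \<Rightarrow> 'a \<Rightarrow> bool" where
  "digroup G l r one \<longleftrightarrow>
     (\<forall>x\<in>G. \<forall>y\<in>G. l x y \<in> G \<and> r x y \<in> G) \<and>
     (\<forall>x\<in>G. \<forall>y\<in>G. \<forall>z\<in>G. l (l x y) z = l x (l y z)) \<and>
     (\<forall>x\<in>G. \<forall>y\<in>G. \<forall>z\<in>G. r (r x y) z = r x (r y z)) \<and>
     (\<forall>x\<in>G. \<forall>y\<in>G. \<forall>z\<in>G. l x (r y z) = r (l x y) z) \<and>
     (\<forall>x\<in>G. \<forall>y\<in>G. \<forall>z\<in>G. r x (l y z) = r x (r y z)) \<and>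
     (\<forall>x\<in>G. \<forall>y\<in>G. \<forall>z\<in>G. l (r x y) z = l (l x y) z) \<and>
     one \<in> G \<and> (\<forall>x\<in>G. l one x = x \<and> r x one = x) \<and>
     (\<forall>x\<in>G. \<exists>y\<in>G. l x y = one \<and> r y x = one)"

definition bar_units :: "'a set \<Rightarrow> ('a \<Rightarrow> 'a \<Rightarrow> 'a) \<Rightarrow> ('a \<Rightarrow> 'a \<Rightarrow> 'a) \<Rightarrow> 'a set" where
  "bar_units G l r = {e \<in> G. \<forall>x\<in>G. l e x = x \<and> r x e = x}"

definition diinv :: "'a set \<Rightarrow> ('a \<Rightarrow> 'a \<Rightarrow> 'a) \<Rightarrow> ('a \<Rightarrow> 'a \<Rightarrow> 'a) \<Rightarrow> 'a \<Rightarrow> 'a \<Rightarrow> 'a" where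
  "diinv G l r one x = (SOME y. y \<in> G \<and> l x y = one \<and> r y x = one)"

definition inverses :: "'a set \<Rightarrow> ('a \<Rightarrow> 'a \<Rightarrow> 'a) \<Rightarrow> ('a \<Rightarrow> 'a \<Rightarrow> 'a) \<Rightarrow> 'a \<Rightarrow> 'a set" where
  "inverses G l r one = (\<lambda>x. diinv G l r one x) ` G"

definition diconj :: "'a set \<Rightarrow> ('a \<Rightarrow> 'a \<Rightarrow> 'a) \<Rightarrow> ('a \<Rightarrow> 'a \<Rightarrow> 'a) \<Rightarrow> 'a \<Rightarrow> 'a \<Rightarrow> 'a \<Rightarrow> 'a" where
  "diconj G l r one x y = r (l x y) (diinv G l r one x)"

definition EJ_left :: "'a set \<Rightarrow> ('a \<Rightarrow> 'a \<Rightarrow> 'a) \<Rightarrow> ('a \<Rightarrow> 'a \<Rightarrow> 'a) \<Rightarrow> 'a \<Rightarrow> 'a \<times> 'a \<Rightarrow> 'a \<times> 'a \<Rightarrow> 'a \<times> 'a" where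
  "EJ_left G l r one p q = (diconj G l r one (snd p) (fst q), l (snd p) (snd q))"

definition EJ_right :: "('a \<Rightarrow> 'a \<Rightarrow> 'a) \<Rightarrow> 'a \<times> 'a \<Rightarrow> 'a \<times> 'a \<Rightarrow> 'a \<times> 'a" where
  "EJ_right r p q = (fst p, r (snd p) (snd q))"

definition digroup_iso ::
  "('a \<Rightarrow> 'b) \<Rightarrow> 'a set \<Rightarrow> ('a \<Rightarrow> 'a \<Rightarrow> 'a) \<Rightarrow> ('a \<Rightarrow> 'a \<Rightarrow> 'a)
     \<Rightarrow> 'b set \<Rightarrow> ('b \<Rightarrow> 'b \<Rightarrow> 'b) \<Rightarrow> ('b \<Rightarrow> 'b \<Rightarrow> 'b) \<Rightarrow> bool" where
  "digroup_iso f G l r H l' r' \<longleftrightarrow> bij_betw f G H \<and>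
     (\<forall>x\<in>G. \<forall>y\<in>G. f (l x y) = l' (f x) (f y) \<and> f (r x y) = r' (f x) (f y))"

end

theory Submission
  imports Defs
begin

context
  fixes G :: "'a set" and l r :: "'a \<Rightarrow> 'a \<Rightarrow> 'a" and one :: 'a
  assumes dg: "digroup G l r one"
begin

lemma cl: "x \<in> G \<Longrightarrow> y \<in> G \<Longrightarrow> l x y \<in> G" "x \<in> G \<Longrightarrow> y \<in> G \<Longrightarrow> r x y \<in> G"
  using dg unfolding digroup_def by auto
lemma la: "x \<in> G \<Longrightarrow> y \<in> G \<Longrightarrow> z \<in> G \<Longrightarrow> l (l x y) z = l x (l y z)"
  using dg unfolding digroup_def by auto
lemma ra: "x \<in> G \<Longrightarrow> y \<in> G \<Longrightarrow> z \<in> G \<Longrightarrow> r (r x y) z = r x (r y z)"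
  using dg unfolding digroup_def by auto
lemma g2: "x \<in> G \<Longrightarrow> y \<in> G \<Longrightarrow> z \<in> G \<Longrightarrow> l x (r y z) = r (l x y) z"
  using dg unfolding digroup_def by auto
lemma g3: "x \<in> G \<Longrightarrow> y \<in> G \<Longrightarrow> z \<in> G \<Longrightarrow> r x (l y z) = r x (r y z)"
  using dg unfolding digroup_def by auto
lemma g4: "x \<in> G \<Longrightarrow> y \<in> G \<Longrightarrow> z \<in> G \<Longrightarrow> l (r x y) z = l (l x y) z"
  using dg unfolding digroup_def by auto
lemma oneG: "one \<in> G" and l1: "x \<in> G \<Longrightarrow> l one x = x" and r1: "x \<in> G \<Longrightarrow> r x one = x"
  using dg unfolding digroup_def by auto

abbreviation iv where "iv x \<equiv> diinv G l r one x"

lemma iv: assumes "x \<in> G" shows "iv x \<in> G" "l x (iv x) = one" "r (iv x) x = one"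
proof -
  have "\<exists>y. y \<in> G \<and> l x y = one \<and> r y x = one" using dg assms unfolding digroup_def by blast
  from someI_ex[OF this] show "iv x \<in> G" "l x (iv x) = one" "r (iv x) x = one"
    unfolding diinv_def by auto
qed

lemma inv_r1: assumes "x \<in> G" "y \<in> G" "l x y = one" "r y x = one" shows "r one y = y"
proof -
  have "y = r y one" using r1 assms by simp
  also have "\<dots> = r y (r x y)" using g3 assms by metis
  also have "\<dots> = r one y" using ra assms by metis
  finally show ?thesis by simp
qed

lemma inv_l1: assumes "x \<in> G" "y \<in> G" "l x y = one" "r y x = one" "y' \<in> G" "l x y' = one"
  shows "y' = l y one"
proof -
  have "y' = l (r y x) y'" using l1 assms by simp
  also have "\<dots> = l (l y x) y'" using g4 assms by metis
  also have "\<dots> = l y one" using la assms by metis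
  finally show ?thesis .
qed

lemma inv_uniq: assumes "x \<in> G" "y \<in> G" "l x y = one" "r y x = one" shows "y = iv x"
proof -
  note i = iv[OF assms(1)]
  have a: "y = r one y" using inv_r1 assms by simp
  have b: "y = l (iv x) one" using inv_l1[OF assms(1) i(1) i(2) i(3) assms(2) assms(3)] assms by simp
  have c: "iv x = r one (iv x)" using inv_r1 i assms by simp
  have "r one y = r one (r (iv x) one)" using b g3 i oneG by metis
  also have "\<dots> = r one (iv x)" using r1 i by simp
  finally show ?thesis using a c by simp
qed

lemma iv_r1: "x \<in> G \<Longrightarrow> r one (iv x) = iv x"
  using inv_r1 iv by blast
lemma iv_l1: "x \<in> G \<Longrightarrow> l (iv x) one = iv x"
  using inv_l1[of x "iv x" "iv x"] iv by simp

definition E where "E = bar_units G l r"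
definition J where "J = inverses G l r one"

lemma E_iff: "e \<in> E \<longleftrightarrow> e \<in> G \<and> (\<forall>x\<in>G. l e x = x \<and> r x e = x)"
  unfolding E_def bar_units_def by auto

lemma e_of: assumes "x \<in> G" shows "r x (iv x) \<in> E"
  unfolding E_iff
proof (intro conjI ballI)
  note i = iv[OF assms]
  show "r x (iv x) \<in> G" using cl i assms by simp
  fix y assume y: "y \<in> G"
  show "l (r x (iv x)) y = y" using g4 i assms y l1 by metis
  show "r y (r x (iv x)) = y" using g3 i assms y r1 by metis
qed

lemma r1E: "e \<in> E \<Longrightarrow> r one e = one" using E_iff oneG by auto
lemma l1E: "e \<in> E \<Longrightarrow> l e one = one" using E_iff oneG by auto

lemma ivr1: assumes "x \<in> G" shows "iv (iv x) = r one x"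
proof -
  note i = iv[OF assms]
  have "l (iv x) (r one x) = r (l (iv x) one) x" using g2 i assms oneG by metis
  hence A: "l (iv x) (r one x) = one" using iv_l1 assms i by simp
  have "r (r one x) (iv x) = r one (r x (iv x))" using ra assms oneG i by metis
  hence B: "r (r one x) (iv x) = one" using r1E e_of assms by simp
  show ?thesis using inv_uniq[OF i(1) _ A B] cl oneG assms by simp
qed

lemma J_iff: "z \<in> J \<longleftrightarrow> z \<in> G \<and> r one z = z"
proof
  assume "z \<in> J" then obtain x where "x \<in> G" "z = iv x" unfolding J_def inverses_def by auto
  thus "z \<in> G \<and> r one z = z" using iv iv_r1 by simp
next
  assume a: "z \<in> G \<and> r one z = z"
  hence "z = iv (iv z)" using ivr1 by simp
  thus "z \<in> J" unfolding J_def inverses_def using iv a by blast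
qed

lemma Jl1: "h \<in> J \<Longrightarrow> l h one = h"
  unfolding J_def inverses_def using iv_l1 by auto

definition g where "g p = r (fst p) (snd p)"
definition f where "f x = (r x (iv x), r one x)"

lemma f_in: assumes "x \<in> G" shows "f x \<in> E \<times> J"
proof -
  have "r one (r one x) = r (r one one) x" using ra oneG assms by metis
  hence "r one (r one x) = r one x" using r1 oneG by simp
  thus ?thesis unfolding f_def using e_of assms J_iff cl oneG by simp
qed

lemma g_in: "p \<in> E \<times> J \<Longrightarrow> g p \<in> G"
  unfolding g_def using E_iff J_iff cl by (cases p) auto

lemma gf: assumes x: "x \<in> G" shows "g (f x) = x"
proof -
  note i = iv[OF x]
  have "r (r x (iv x)) (r one x) = r x (r (iv x) (r one x))" using ra x i cl oneG by metis
  also have "r (iv x) (r one x) = r (r (iv x) one) x" using ra x i oneG by metis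
  also have "\<dots> = one" using r1 i by simp
  finally show ?thesis unfolding g_def f_def using r1 x by simp
qed

lemma fg: assumes "u \<in> E" "h \<in> J" shows "f (g (u,h)) = (u,h)"
proof -
  have u: "u \<in> G" "\<And>x. x \<in> G \<Longrightarrow> l u x = x \<and> r x u = x" using assms E_iff by auto
  have h: "h \<in> G" "r one h = h" using assms J_iff by auto
  note hi = iv[OF h(1)]
  have A: "l (r u h) (iv h) = one" using g4 u h hi by metis
  have B: "r (iv h) (r u h) = one" using ra u h hi by metis
  have "iv h = iv (r u h)" using inv_uniq[OF _ hi(1) A B] cl u h by simp
  hence "r (r u h) (iv (r u h)) = r (r u h) (iv h)" by simp
  also have "\<dots> = r u (r h (iv h))" using ra u h hi by metis
  also have "\<dots> = u" using e_of[OF h(1)] E_iff u by simp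
  finally have 1: "r (r u h) (iv (r u h)) = u" .
  have "r one (r u h) = r (r one u) h" using ra oneG u h by metis
  hence 2: "r one (r u h) = h" using r1E assms h by simp
  show ?thesis unfolding f_def g_def using 1 2 by simp
qed

lemma EJl_in: assumes "p \<in> E \<times> J" "q \<in> E \<times> J" shows "EJ_left G l r one p q \<in> E \<times> J"
proof -
  obtain u h where p: "p = (u,h)" "u \<in> E" "h \<in> J" using assms by auto
  obtain v k where q: "q = (v,k)" "v \<in> E" "k \<in> J" using assms by auto
  have u: "u \<in> G" using p E_iff by auto
  have v: "v \<in> G" "\<And>x. x \<in> G \<Longrightarrow> l v x = x \<and> r x v = x" using q E_iff by auto
  have h: "h \<in> G" "r one h = h" using p J_iff by auto
  have k: "k \<in> G" "r one k = k" using q J_iff by auto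
  note hi = iv[OF h(1)]
  have "diconj G l r one h v \<in> E" unfolding E_iff diconj_def
  proof (intro conjI ballI)
    show "r (l h v) (iv h) \<in> G" using cl h v hi by simp
    fix y assume y: "y \<in> G"
    have "l (r (l h v) (iv h)) y = l (l (l h v) (iv h)) y" using g4 cl h v hi y by metis
    also have "\<dots> = l (l h v) (l (iv h) y)" using la cl h v hi y by metis
    also have "\<dots> = l h (l v (l (iv h) y))" using la cl h v hi y by metis
    also have "\<dots> = l h (l (iv h) y)" using v(2) cl hi y by simp
    also have "\<dots> = l (l h (iv h)) y" using la h hi y by metis
    also have "\<dots> = y" using hi l1 y by simp
    finally show "l (r (l h v) (iv h)) y = y" .
    have "r y (r (l h v) (iv h)) = r (r y (l h v)) (iv h)" using ra cl h v hi y by metis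
    also have "\<dots> = r (r y (r h v)) (iv h)" using g3 h v y by metis
    also have "\<dots> = r y (r (r h v) (iv h))" using ra cl h v hi y by metis
    also have "\<dots> = r y (r h (iv h))" using v h by simp
    also have "\<dots> = y" using e_of[OF h(1)] E_iff y by simp
    finally show "r y (r (l h v) (iv h)) = y" .
  qed
  moreover have "l h k \<in> J" unfolding J_iff
  proof
    show "l h k \<in> G" using cl h k by simp
    have "l h k = l h (r one k)" using k by simp
    also have "\<dots> = r (l h one) k" using g2 h k oneG by metis
    also have "\<dots> = r h k" using Jl1 p by simp
    finally have hk: "l h k = r h k" .
    have "r one (r h k) = r (r one h) k" using ra oneG h k by metis
    thus "r one (l h k) = l h k" unfolding hk using h by simp
  qed
  ultimately show ?thesis unfolding EJ_left_def p q by simp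
qed

lemma EJr_in: assumes "p \<in> E \<times> J" "q \<in> E \<times> J" shows "EJ_right r p q \<in> E \<times> J"
proof -
  obtain u h where p: "p = (u,h)" "u \<in> E" "h \<in> J" using assms by auto
  obtain v k where q: "q = (v,k)" "v \<in> E" "k \<in> J" using assms by auto
  have h: "h \<in> G" "r one h = h" using p J_iff by auto
  have k: "k \<in> G" "r one k = k" using q J_iff by auto
  have "r one (r h k) = r (r one h) k" using ra oneG h k by metis
  hence "r h k \<in> J" unfolding J_iff using h k cl by simp
  thus ?thesis unfolding EJ_right_def p q using p by simp
qed

lemma g_l: assumes "p \<in> E \<times> J" "q \<in> E \<times> J" shows "g (EJ_left G l r one p q) = l (g p) (g q)"
proof -
  obtain u h where p: "p = (u,h)" "u \<in> E" "h \<in> J" using assms by auto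
  obtain v k where q: "q = (v,k)" "v \<in> E" "k \<in> J" using assms by auto
  have u: "u \<in> G" "\<And>x. x \<in> G \<Longrightarrow> l u x = x \<and> r x u = x" using p E_iff by auto
  have v: "v \<in> G" "\<And>x. x \<in> G \<Longrightarrow> l v x = x \<and> r x v = x" using q E_iff by auto
  have h: "h \<in> G" "r one h = h" using p J_iff by auto
  have k: "k \<in> G" "r one k = k" using q J_iff by auto
  note hi = iv[OF h(1)]
  have "l (r u h) (r v k) = l (l u h) (r v k)" using g4 u h v k cl by metis
  also have "\<dots> = r (l h v) k" using u h v k cl g2 by metis
  finally have R: "l (g p) (g q) = r (l h v) k" unfolding g_def p q by simp
  have "r (iv h) (l h k) = r (iv h) (r h k)" using g3 hi h k by metis
  also have "\<dots> = k" using ra hi h k by metis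
  finally have K: "r (iv h) (l h k) = k" .
  have "g (EJ_left G l r one p q) = r (r (l h v) (iv h)) (l h k)"
    unfolding g_def EJ_left_def diconj_def p q by simp
  also have "\<dots> = r (l h v) k" using ra K cl h v k hi by metis
  finally show ?thesis using R by simp
qed

lemma g_r: assumes "p \<in> E \<times> J" "q \<in> E \<times> J" shows "g (EJ_right r p q) = r (g p) (g q)"
proof -
  obtain u h where p: "p = (u,h)" "u \<in> E" "h \<in> J" using assms by auto
  obtain v k where q: "q = (v,k)" "v \<in> E" "k \<in> J" using assms by auto
  have u: "u \<in> G" using p E_iff by auto
  have v: "v \<in> G" "\<And>x. x \<in> G \<Longrightarrow> l v x = x \<and> r x v = x" using q E_iff by auto
  have h: "h \<in> G" using p J_iff by auto
  have k: "k \<in> G" using q J_iff by auto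
  have "r (r u h) (r v k) = r u (r (r h v) k)" using ra u h v k cl by metis
  thus ?thesis unfolding g_def EJ_right_def p q using v h ra u k by simp
qed

lemma fg': "p \<in> E \<times> J \<Longrightarrow> f (g p) = p"
  using fg by (cases p) auto

lemma main: "digroup_iso f G l r (E \<times> J) (EJ_left G l r one) (EJ_right r)"
  unfolding digroup_iso_def
proof (intro conjI ballI)
  show "bij_betw f G (E \<times> J)"
  proof (rule bij_betw_byWitness[where f'=g])
    show "\<forall>a\<in>G. g (f a) = a" using gf by simp
    show "\<forall>a\<in>E \<times> J. f (g a) = a" using fg by auto
    show "f ` G \<subseteq> E \<times> J" using f_in by blast
    show "g ` (E \<times> J) \<subseteq> G" using g_in by blast
  qed
  fix x y assume x: "x \<in> G" and y: "y \<in> G"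
  have "f (l x y) = f (l (g (f x)) (g (f y)))" using gf x y by simp
  also have "\<dots> = EJ_left G l r one (f x) (f y)"
    using g_l[OF f_in[OF x] f_in[OF y], symmetric] fg'[OF EJl_in[OF f_in[OF x] f_in[OF y]]] by simp
  finally show "f (l x y) = EJ_left G l r one (f x) (f y)" .
  have "f (r x y) = f (r (g (f x)) (g (f y)))" using gf x y by simp
  also have "\<dots> = EJ_right r (f x) (f y)"
    using g_r[OF f_in[OF x] f_in[OF y], symmetric] fg'[OF EJr_in[OF f_in[OF x] f_in[OF y]]] by simp
  finally show "f (r x y) = EJ_right r (f x) (f y)" .
qed

lemma main2: "digroup_iso f G l r (bar_units G l r \<times> inverses G l r one) (EJ_left G l r one) (EJ_right r)"
  using main unfolding E_def J_def .

end

theorem theorem4p8: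
  fixes G :: "'a set" and l r :: "'a \<Rightarrow> 'a \<Rightarrow> 'a" and one :: 'a
  assumes "digroup G l r one"
  shows "\<exists>f. digroup_iso f G l r
             (bar_units G l r \<times> inverses G l r one) (EJ_left G l r one) (EJ_right r)"
proof -
  have "digroup_iso (f G l r one) G l r (bar_units G l r \<times> inverses G l r one) (EJ_left G l r one) (EJ_right r)"
    using main2[OF assms] .
  thus ?thesis by blast
qed

end
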